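(* Let $(\Psi_d)_d$ be a constraint structure that is both a meet and a lift constraint structure, let $(\le,\wedge,P)$ be a decent triple on it, and let $(R^d)_d$ be a constraint-refining predicate that relates to a constraint-producing predicate $(\models^d)_d$ (axioms A1, A2 below). If $\sigma\to\vdash^{d}\Gamma\to\sigma'$ is derivable in SDI, then there exists $\sigma''\in\Psi_d$ such that $\sigma'\simeq\sigma\wedge\sigma''$, $P(\sigma\wedge\sigma'')$, and $\vdash^{d}\Gamma\to\sigma''$ is derivable in DI.
   Context: Formulas are first-order formulas in negation normal form, built from literals using $\wedge,\vee,\forall,\exists$. Eigenvariables (written $\bar x$) and meta-variables (written $X$) are two disjoint infinite supplies of variables. Domains: there is an initial domain $d_0$; for a domain $d$ and an eigenvariable $\bar x$ (resp. meta-variable $X$) not declared in $d$, $d;\bar x$ (resp. $d;X$) is a domain declaring additionally $\bar x$ (resp. $X$); all domains arise this way. A formula of domain $d$ is one whose free variables are eigenvariables or meta-variables declared in $d$; a context of domain $d$ is a finite multiset of formulas of domain $d$; $\Gamma_{lit}$ is the set of literals that are elements of $\Gamma$. A constraint structure consists of a set $\Psi_d$ for each domain $d$, with $\Psi_{d;\bar x}=\Psi_d$, and projection maps $\Psi_{d;X}\to\Psi_d$, $\sigma\mapsto\sigma_\downarrow$; a meet constraint structure additionally has a binary operation $\wedge$ on each $\Psi_d$; a lift constraint structure additionally has maps $\Psi_d\to\Psi_{d;X}$, $\sigma\mapsto\sigma^\uparrow$. A triple $(\le,\wedge,P)$, where $\le$ is a family of preorders on the $\Psi_d$, $\wedge$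 the meet operations, and $P$ a family of predicates on the $\Psi_d$, is decent if, writing $\simeq$ for the equivalence relation generated by $\le$: (D1) for all $\sigma,\sigma'\in\Psi_d$, $\sigma\wedge\sigma'$ is a greatest lower bound of $\sigma,\sigma'$ for $\le$; (D2) for all $\sigma\in\Psi_d$ and $\sigma',\sigma''\in\Psi_{d;X}$, $\sigma''\simeq\sigma^\uparrow\wedge\sigma'$ implies $\sigma''_\downarrow\simeq\sigma\wedge\sigma'_\downarrow$; (P1) for all $\sigma\in\Psi_{d;X}$, $P(\sigma)\iff P(\sigma_\downarrow)$; (P2) for all $\sigma,\sigma'\in\Psi_d$, $P(\sigma)$ and $\sigma\le\sigma'$ imply $P(\sigma')$. A constraint-producing predicate is a family of relations $\mathcal A\models^d\sigma$ between sets $\mathcal A$ of literals of domain $d$ and $\sigma\in\Psi_d$. A constraint-refining predicate is a family of relations $R^d(\sigma,\mathcal A,\sigma')$ between sets $\mathcal A$ of literals of domain $d$ and pairs $\sigma,\sigma'\in\Psi_d$. It relates to $(\models^d)_d$ if for all $d$, all sets $\mathcal A$ of literals of domain $d$ and all $\sigma\in\Psi_d$: (A1) for all $\sigma'\in\Psi_d$, $R^d(\sigma,\mathcal A,\sigma')$ implies there is $\sigma''\in\Psi_d$ with $\sigma'\simeq\sigma\wedge\sigma''$, $P(\sigma\wedge\sigma'')$ and $\mathcal A\models^d\sigma''$; (A2) for all $\sigma'\in\Psi_d$, if $P(\sigma\wedge\sigma')$ and $\mathcal A\models^d\sigma'$ then there is $\sigma''\in\Psi_d$ with $\sigma''\simeq\sigma\wedge\sigma'$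 and $R^d(\sigma,\mathcal A,\sigma'')$. System DI derives $\vdash^d\Gamma\to\sigma$ ($\Gamma$, $\sigma$ of domain $d$) by: $\vdash^d\Gamma\to\sigma$ if $\Gamma_{lit}\models^d\sigma$; from $\vdash^d\Gamma,A\to\sigma$ and $\vdash^d\Gamma,B\to\sigma'$ infer $\vdash^d\Gamma,A\wedge B\to\sigma\wedge\sigma'$; from $\vdash^d\Gamma,A,B\to\sigma$ infer $\vdash^d\Gamma,A\vee B\to\sigma$; from $\vdash^{d;X}\Gamma,A[x:=X],\exists xA\to\sigma$ ($X$ fresh meta-variable) infer $\vdash^d\Gamma,\exists xA\to\sigma_\downarrow$; from $\vdash^{d;\bar x}\Gamma,A[x:=\bar x]\to\sigma$ ($\bar x$ fresh eigenvariable) infer $\vdash^d\Gamma,\forall xA\to\sigma$. System SDI derives $\sigma\to\vdash^d\Gamma\to\sigma'$ ($\Gamma,\sigma,\sigma'$ of domain $d$) by: $\sigma\to\vdash^d\Gamma\to\sigma'$ if $R^d(\sigma,\Gamma_{lit},\sigma')$; from $\sigma\to\vdash^d\Gamma,A,B\to\sigma'$ infer $\sigma\to\vdash^d\Gamma,A\vee B\to\sigma'$; for $i\in\{0,1\}$, from $\sigma\to\vdash^d\Gamma,A_i\to\sigma''$ and $\sigma''\to\vdash^d\Gamma,A_{1-i}\to\sigma'$ infer $\sigma\to\vdash^d\Gamma,A_0\wedge A_1\to\sigma'$; from $\sigma^\uparrow\to\vdash^{d;X}\Gamma,A[x:=X],\exists xA\to\sigma'$ ($X$ fresh meta-variable)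 infer $\sigma\to\vdash^d\Gamma,\exists xA\to\sigma'_\downarrow$; from $\sigma\to\vdash^{d;\bar x}\Gamma,A[x:=\bar x]\to\sigma'$ ($\bar x$ fresh eigenvariable) infer $\sigma\to\vdash^d\Gamma,\forall xA\to\sigma'$. *)

theory Defs
  imports Main "HOL-Library.Multiset"
begin

datatype var = Bnd nat | Eig nat | Met nat

datatype 'f trm = Var var | Fn 'f "'f trm list"

text \<open>Formulas in NNF: a literal is a (possibly negated) atom; the boolean is the polarity.
  Forall x A / Exists x A bind the bound variable Bnd x in A.\<close>
datatype ('f, 'p) fm =
    Lit bool 'p "'f trm list"
  | Conj "('f, 'p) fm" "('f, 'p) fm"
  | Disj "('f, 'p) fm" "('f, 'p) fm"
  | Forall nat "('f, 'p) fm"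
  | Exists nat "('f, 'p) fm"

fun is_lit :: "('f, 'p) fm \<Rightarrow> bool" where
  "is_lit (Lit _ _ _) = True"
| "is_lit _ = False"

fun fv_trm :: "'f trm \<Rightarrow> var set" where
  "fv_trm (Var v) = {v}"
| "fv_trm (Fn f ts) = (\<Union>t\<in>set ts. fv_trm t)"

fun fv_fm :: "('f, 'p) fm \<Rightarrow> var set" where
  "fv_fm (Lit b p ts) = (\<Union>t\<in>set ts. fv_trm t)"
| "fv_fm (Conj A B) = fv_fm A \<union> fv_fm B"
| "fv_fm (Disj A B) = fv_fm A \<union> fv_fm B"
| "fv_fm (Forall x A) = fv_fm A - {Bnd x}"
| "fv_fm (Exists x A) = fv_fm A - {Bnd x}"

text \<open>Substitution of a term for the (free occurrences of the) bound variable x.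
  We only substitute eigenvariables / meta-variables, so no capture can occur.\<close>
fun subst_trm :: "nat \<Rightarrow> 'f trm \<Rightarrow> 'f trm \<Rightarrow> 'f trm" where
  "subst_trm x s (Var v) = (if v = Bnd x then s else Var v)"
| "subst_trm x s (Fn f ts) = Fn f (map (subst_trm x s) ts)"

fun subst :: "nat \<Rightarrow> 'f trm \<Rightarrow> ('f, 'p) fm \<Rightarrow> ('f, 'p) fm" where
  "subst x s (Lit b p ts) = Lit b p (map (subst_trm x s) ts)"
| "subst x s (Conj A B) = Conj (subst x s A) (subst x s B)"
| "subst x s (Disj A B) = Disj (subst x s A) (subst x s B)"
| "subst x s (Forall y A) = (if y = x then Forall y A else Forall y (subst x s A))"
| "subst x s (Exists y A) = (if y = x then Exists y A else Exists y (subst x s A))"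

text \<open>A domain is the list
  of declarations made on top of the initial domain d0 = []; the domain d;v is v # d.\<close>
datatype decl = DE nat | DM nat

type_synonym domain = "decl list"

definition d0 :: domain where "d0 = []"

definition is_domain :: "domain \<Rightarrow> bool" where
  "is_domain d \<longleftrightarrow> distinct d"

definition declared :: "domain \<Rightarrow> var \<Rightarrow> bool" where
  "declared d v \<longleftrightarrow> (\<exists>n. v = Eig n \<and> DE n \<in> set d) \<or> (\<exists>n. v = Met n \<and> DM n \<in> set d)"

definition fm_of :: "domain \<Rightarrow> ('f, 'p) fm \<Rightarrow> bool" where
  "fm_of d A \<longleftrightarrow> (\<forall>v\<in>fv_fm A. declared d v)"

definition ctx_of :: "domain \<Rightarrow> ('f, 'p) fm multiset \<Rightarrow> bool" where
  "ctx_of d \<Gamma> \<longleftrightarrow> (\<forall>A\<in>#\<Gamma>. fm_of d A)"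

definition lits_of :: "domain \<Rightarrow> ('f, 'p) fm set \<Rightarrow> bool" where
  "lits_of d \<A> \<longleftrightarrow> (\<forall>A\<in>\<A>. is_lit A \<and> fm_of d A)"

definition ctx_lit :: "('f, 'p) fm multiset \<Rightarrow> ('f, 'p) fm set" where
  "ctx_lit \<Gamma> = {A \<in> set_mset \<Gamma>. is_lit A}"

text \<open>Constraints live in a carrier type 'c; \<Psi> d is the set of constraints of domain d.
  proj d X : \<Psi>(d;X) \<rightarrow> \<Psi> d  (\<sigma> \<mapsto> \<sigma>\<down>),  lift d X : \<Psi> d \<rightarrow> \<Psi>(d;X)  (\<sigma> \<mapsto> \<sigma>\<up>),
  meet d : binary operation on \<Psi> d.\<close>
definition constraint_structure ::
  "(domain \<Rightarrow> 'c set) \<Rightarrow> (domain \<Rightarrow> nat \<Rightarrow> 'c \<Rightarrow> 'c) \<Rightarrow> bool" where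
  "constraint_structure \<Psi> proj \<longleftrightarrow>
     (\<forall>d x. is_domain d \<and> DE x \<notin> set d \<longrightarrow> \<Psi> (DE x # d) = \<Psi> d) \<and>
     (\<forall>d X. is_domain d \<and> DM X \<notin> set d \<longrightarrow> (\<forall>\<sigma>\<in>\<Psi> (DM X # d). proj d X \<sigma> \<in> \<Psi> d))"

text \<open>Since \<Psi>(d;x) is the same set as \<Psi> d, the operation on it is the same one.\<close>
definition meet_structure ::
  "(domain \<Rightarrow> 'c set) \<Rightarrow> (domain \<Rightarrow> 'c \<Rightarrow> 'c \<Rightarrow> 'c) \<Rightarrow> bool" where
  "meet_structure \<Psi> meet \<longleftrightarrow>
     (\<forall>d. is_domain d \<longrightarrow> (\<forall>\<sigma>\<in>\<Psi> d. \<forall>\<sigma>'\<in>\<Psi> d. meet d \<sigma> \<sigma>' \<in> \<Psi> d)) \<and>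
     (\<forall>d x. is_domain d \<and> DE x \<notin> set d \<longrightarrow>
        (\<forall>\<sigma>\<in>\<Psi> d. \<forall>\<sigma>'\<in>\<Psi> d. meet (DE x # d) \<sigma> \<sigma>' = meet d \<sigma> \<sigma>'))"

definition lift_structure ::
  "(domain \<Rightarrow> 'c set) \<Rightarrow> (domain \<Rightarrow> nat \<Rightarrow> 'c \<Rightarrow> 'c) \<Rightarrow> bool" where
  "lift_structure \<Psi> lift \<longleftrightarrow>
     (\<forall>d X. is_domain d \<and> DM X \<notin> set d \<longrightarrow> (\<forall>\<sigma>\<in>\<Psi> d. lift d X \<sigma> \<in> \<Psi> (DM X # d)))"

definition simeq :: "(domain \<Rightarrow> 'c \<Rightarrow> 'c \<Rightarrow> bool) \<Rightarrow> domain \<Rightarrow> 'c \<Rightarrow> 'c \<Rightarrow> bool" where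
  "simeq le d \<sigma> \<sigma>' \<longleftrightarrow> le d \<sigma> \<sigma>' \<and> le d \<sigma>' \<sigma>"

definition decent ::
  "(domain \<Rightarrow> 'c set) \<Rightarrow> (domain \<Rightarrow> nat \<Rightarrow> 'c \<Rightarrow> 'c) \<Rightarrow> (domain \<Rightarrow> nat \<Rightarrow> 'c \<Rightarrow> 'c)
   \<Rightarrow> (domain \<Rightarrow> 'c \<Rightarrow> 'c \<Rightarrow> bool) \<Rightarrow> (domain \<Rightarrow> 'c \<Rightarrow> 'c \<Rightarrow> 'c) \<Rightarrow> (domain \<Rightarrow> 'c \<Rightarrow> bool) \<Rightarrow> bool" where
  "decent \<Psi> proj lift le meet P \<longleftrightarrow>
     \<comment> \<open>le is a preorder on each \<Psi> d\<close>
     (\<forall>d. is_domain d \<longrightarrow> (\<forall>\<sigma>\<in>\<Psi> d. le d \<sigma> \<sigma>) \<and>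
        (\<forall>\<sigma>\<in>\<Psi> d. \<forall>\<sigma>'\<in>\<Psi> d. \<forall>\<sigma>''\<in>\<Psi> d. le d \<sigma> \<sigma>' \<and> le d \<sigma>' \<sigma>'' \<longrightarrow> le d \<sigma> \<sigma>'')) \<and>
     \<comment> \<open>\<Psi>(d;x) = \<Psi> d carries the same preorder and predicate\<close>
     (\<forall>d x. is_domain d \<and> DE x \<notin> set d \<longrightarrow>
        (\<forall>\<sigma>\<in>\<Psi> d. \<forall>\<sigma>'\<in>\<Psi> d. le (DE x # d) \<sigma> \<sigma>' = le d \<sigma> \<sigma>') \<and>
        (\<forall>\<sigma>\<in>\<Psi> d. P (DE x # d) \<sigma> = P d \<sigma>)) \<and>
     \<comment> \<open>D1\<close>
     (\<forall>d. is_domain d \<longrightarrow> (\<forall>\<sigma>\<in>\<Psi> d. \<forall>\<sigma>'\<in>\<Psi> d.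
        le d (meet d \<sigma> \<sigma>') \<sigma> \<and> le d (meet d \<sigma> \<sigma>') \<sigma>' \<and>
        (\<forall>\<tau>\<in>\<Psi> d. le d \<tau> \<sigma> \<and> le d \<tau> \<sigma>' \<longrightarrow> le d \<tau> (meet d \<sigma> \<sigma>')))) \<and>
     \<comment> \<open>D2\<close>
     (\<forall>d X. is_domain d \<and> DM X \<notin> set d \<longrightarrow>
        (\<forall>\<sigma>\<in>\<Psi> d. \<forall>\<sigma>'\<in>\<Psi> (DM X # d). \<forall>\<sigma>''\<in>\<Psi> (DM X # d).
          simeq le (DM X # d) \<sigma>'' (meet (DM X # d) (lift d X \<sigma>) \<sigma>') \<longrightarrow>
          simeq le d (proj d X \<sigma>'') (meet d \<sigma> (proj d X \<sigma>')))) \<and>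
     \<comment> \<open>P1\<close>
     (\<forall>d X. is_domain d \<and> DM X \<notin> set d \<longrightarrow>
        (\<forall>\<sigma>\<in>\<Psi> (DM X # d). P (DM X # d) \<sigma> \<longleftrightarrow> P d (proj d X \<sigma>))) \<and>
     \<comment> \<open>P2\<close>
     (\<forall>d. is_domain d \<longrightarrow> (\<forall>\<sigma>\<in>\<Psi> d. \<forall>\<sigma>'\<in>\<Psi> d. P d \<sigma> \<and> le d \<sigma> \<sigma>' \<longrightarrow> P d \<sigma>'))"

text \<open>Constraint-producing predicate: models d \<A> \<sigma>  stands for  \<A> \<Turnstile>^d \<sigma>.
  Constraint-refining predicate: R d \<sigma> \<A> \<sigma>'  stands for  R^d(\<sigma>, \<A>, \<sigma>').\<close>
definition relates ::
  "(domain \<Rightarrow> 'c set) \<Rightarrow> (domain \<Rightarrow> 'c \<Rightarrow> 'c \<Rightarrow> bool) \<Rightarrow> (domain \<Rightarrow> 'c \<Rightarrow> 'c \<Rightarrow> 'c)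
   \<Rightarrow> (domain \<Rightarrow> 'c \<Rightarrow> bool) \<Rightarrow> (domain \<Rightarrow> ('f, 'p) fm set \<Rightarrow> 'c \<Rightarrow> bool)
   \<Rightarrow> (domain \<Rightarrow> 'c \<Rightarrow> ('f, 'p) fm set \<Rightarrow> 'c \<Rightarrow> bool) \<Rightarrow> bool" where
  "relates \<Psi> le meet P models R \<longleftrightarrow>
     (\<forall>d \<A>. is_domain d \<and> lits_of d \<A> \<longrightarrow> (\<forall>\<sigma>\<in>\<Psi> d.
        \<comment> \<open>A1\<close>
        (\<forall>\<sigma>'\<in>\<Psi> d. R d \<sigma> \<A> \<sigma>' \<longrightarrow>
           (\<exists>\<sigma>''\<in>\<Psi> d. simeq le d \<sigma>' (meet d \<sigma> \<sigma>'') \<and> P d (meet d \<sigma> \<sigma>'') \<and> models d \<A> \<sigma>'')) \<and>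
        \<comment> \<open>A2\<close>
        (\<forall>\<sigma>'\<in>\<Psi> d. P d (meet d \<sigma> \<sigma>') \<and> models d \<A> \<sigma>' \<longrightarrow>
           (\<exists>\<sigma>''\<in>\<Psi> d. simeq le d \<sigma>'' (meet d \<sigma> \<sigma>') \<and> R d \<sigma> \<A> \<sigma>''))))"

text \<open>DI \<Psi> models meet proj d \<Gamma> \<sigma>  stands for  \<turnstile>^d \<Gamma> \<rightarrow> \<sigma>.\<close>
inductive DI ::
  "(domain \<Rightarrow> 'c set) \<Rightarrow> (domain \<Rightarrow> ('f, 'p) fm set \<Rightarrow> 'c \<Rightarrow> bool) \<Rightarrow> (domain \<Rightarrow> 'c \<Rightarrow> 'c \<Rightarrow> 'c)
   \<Rightarrow> (domain \<Rightarrow> nat \<Rightarrow> 'c \<Rightarrow> 'c) \<Rightarrow> domain \<Rightarrow> ('f, 'p) fm multiset \<Rightarrow> 'c \<Rightarrow> bool"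
  for \<Psi> models meet proj where
  DI_ax: "\<lbrakk>is_domain d; ctx_of d \<Gamma>; \<sigma> \<in> \<Psi> d; models d (ctx_lit \<Gamma>) \<sigma>\<rbrakk>
          \<Longrightarrow> DI \<Psi> models meet proj d \<Gamma> \<sigma>"
| DI_conj: "\<lbrakk>DI \<Psi> models meet proj d (\<Gamma> + {#A#}) \<sigma>; DI \<Psi> models meet proj d (\<Gamma> + {#B#}) \<sigma>'\<rbrakk>
          \<Longrightarrow> DI \<Psi> models meet proj d (\<Gamma> + {#Conj A B#}) (meet d \<sigma> \<sigma>')"
| DI_disj: "DI \<Psi> models meet proj d (\<Gamma> + {#A, B#}) \<sigma>
          \<Longrightarrow> DI \<Psi> models meet proj d (\<Gamma> + {#Disj A B#}) \<sigma>"
| DI_ex: "\<lbrakk>is_domain d; DM X \<notin> set d; ctx_of d (\<Gamma> + {#Exists x A#});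
           DI \<Psi> models meet proj (DM X # d) (\<Gamma> + {#subst x (Var (Met X)) A, Exists x A#}) \<sigma>\<rbrakk>
          \<Longrightarrow> DI \<Psi> models meet proj d (\<Gamma> + {#Exists x A#}) (proj d X \<sigma>)"
| DI_all: "\<lbrakk>is_domain d; DE y \<notin> set d; ctx_of d (\<Gamma> + {#Forall x A#});
           DI \<Psi> models meet proj (DE y # d) (\<Gamma> + {#subst x (Var (Eig y)) A#}) \<sigma>\<rbrakk>
          \<Longrightarrow> DI \<Psi> models meet proj d (\<Gamma> + {#Forall x A#}) \<sigma>"

text \<open>SDI \<Psi> R proj lift d \<sigma> \<Gamma> \<sigma>'  stands for  \<sigma> \<rightarrow> \<turnstile>^d \<Gamma> \<rightarrow> \<sigma>'.\<close>
inductive SDI ::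
  "(domain \<Rightarrow> 'c set) \<Rightarrow> (domain \<Rightarrow> 'c \<Rightarrow> ('f, 'p) fm set \<Rightarrow> 'c \<Rightarrow> bool)
   \<Rightarrow> (domain \<Rightarrow> nat \<Rightarrow> 'c \<Rightarrow> 'c) \<Rightarrow> (domain \<Rightarrow> nat \<Rightarrow> 'c \<Rightarrow> 'c)
   \<Rightarrow> domain \<Rightarrow> 'c \<Rightarrow> ('f, 'p) fm multiset \<Rightarrow> 'c \<Rightarrow> bool"
  for \<Psi> R proj lift where
  SDI_ax: "\<lbrakk>is_domain d; ctx_of d \<Gamma>; \<sigma> \<in> \<Psi> d; \<sigma>' \<in> \<Psi> d; R d \<sigma> (ctx_lit \<Gamma>) \<sigma>'\<rbrakk>
          \<Longrightarrow> SDI \<Psi> R proj lift d \<sigma> \<Gamma> \<sigma>'"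
| SDI_disj: "SDI \<Psi> R proj lift d \<sigma> (\<Gamma> + {#A, B#}) \<sigma>'
          \<Longrightarrow> SDI \<Psi> R proj lift d \<sigma> (\<Gamma> + {#Disj A B#}) \<sigma>'"
| SDI_conj1: "\<lbrakk>SDI \<Psi> R proj lift d \<sigma> (\<Gamma> + {#A#}) \<sigma>''; SDI \<Psi> R proj lift d \<sigma>'' (\<Gamma> + {#B#}) \<sigma>'\<rbrakk>
          \<Longrightarrow> SDI \<Psi> R proj lift d \<sigma> (\<Gamma> + {#Conj A B#}) \<sigma>'"
| SDI_conj2: "\<lbrakk>SDI \<Psi> R proj lift d \<sigma> (\<Gamma> + {#B#}) \<sigma>''; SDI \<Psi> R proj lift d \<sigma>'' (\<Gamma> + {#A#}) \<sigma>'\<rbrakk>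
          \<Longrightarrow> SDI \<Psi> R proj lift d \<sigma> (\<Gamma> + {#Conj A B#}) \<sigma>'"
| SDI_ex: "\<lbrakk>is_domain d; DM X \<notin> set d; ctx_of d (\<Gamma> + {#Exists x A#}); \<sigma> \<in> \<Psi> d;
           SDI \<Psi> R proj lift (DM X # d) (lift d X \<sigma>)
              (\<Gamma> + {#subst x (Var (Met X)) A, Exists x A#}) \<sigma>'\<rbrakk>
          \<Longrightarrow> SDI \<Psi> R proj lift d \<sigma> (\<Gamma> + {#Exists x A#}) (proj d X \<sigma>')"
| SDI_all: "\<lbrakk>is_domain d; DE y \<notin> set d; ctx_of d (\<Gamma> + {#Forall x A#}); \<sigma> \<in> \<Psi> d;
           SDI \<Psi> R proj lift (DE y # d) \<sigma> (\<Gamma> + {#subst x (Var (Eig y)) A#}) \<sigma>'\<rbrakk>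
          \<Longrightarrow> SDI \<Psi> R proj lift d \<sigma> (\<Gamma> + {#Forall x A#}) \<sigma>'"

end

theory Submission
  imports Defs
begin

lemma main_ind:
  fixes \<Psi> :: "domain \<Rightarrow> 'c set"
    and proj lift :: "domain \<Rightarrow> nat \<Rightarrow> 'c \<Rightarrow> 'c"
    and meet :: "domain \<Rightarrow> 'c \<Rightarrow> 'c \<Rightarrow> 'c"
    and le :: "domain \<Rightarrow> 'c \<Rightarrow> 'c \<Rightarrow> bool"
    and P :: "domain \<Rightarrow> 'c \<Rightarrow> bool"
    and models :: "domain \<Rightarrow> ('f, 'p) fm set \<Rightarrow> 'c \<Rightarrow> bool"
    and R :: "domain \<Rightarrow> 'c \<Rightarrow> ('f, 'p) fm set \<Rightarrow> 'c \<Rightarrow> bool"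
  assumes CS: "constraint_structure \<Psi> proj"
    and MS: "meet_structure \<Psi> meet"
    and LS: "lift_structure \<Psi> lift"
    and DC: "decent \<Psi> proj lift le meet P"
    and RL: "relates \<Psi> le meet P models R"
    and "SDI \<Psi> R proj lift d \<sigma> \<Gamma> \<sigma>'"
  shows "is_domain d \<and> \<sigma> \<in> \<Psi> d \<and> \<sigma>' \<in> \<Psi> d \<and>
     (\<exists>\<sigma>''\<in>\<Psi> d. simeq le d \<sigma>' (meet d \<sigma> \<sigma>'') \<and> P d (meet d \<sigma> \<sigma>'')
                   \<and> DI \<Psi> models meet proj d \<Gamma> \<sigma>'')"
proof -
  have refl: "\<And>d s. is_domain d \<Longrightarrow> s \<in> \<Psi> d \<Longrightarrow> le d s s"
    using DC unfolding decent_def by meson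
  have trans: "\<And>d a b c. is_domain d \<Longrightarrow> a \<in> \<Psi> d \<Longrightarrow> b \<in> \<Psi> d \<Longrightarrow> c \<in> \<Psi> d
     \<Longrightarrow> le d a b \<Longrightarrow> le d b c \<Longrightarrow> le d a c"
    using DC unfolding decent_def by meson
  have mc: "\<And>d a b. is_domain d \<Longrightarrow> a \<in> \<Psi> d \<Longrightarrow> b \<in> \<Psi> d \<Longrightarrow> meet d a b \<in> \<Psi> d"
    using MS unfolding meet_structure_def by meson
  have g1: "\<And>d a b. is_domain d \<Longrightarrow> a \<in> \<Psi> d \<Longrightarrow> b \<in> \<Psi> d \<Longrightarrow> le d (meet d a b) a"
    using DC unfolding decent_def by meson
  have g2: "\<And>d a b. is_domain d \<Longrightarrow> a \<in> \<Psi> d \<Longrightarrow> b \<in> \<Psi> d \<Longrightarrow> le d (meet d a b) b"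
    using DC unfolding decent_def by meson
  have g3: "\<And>d a b t. is_domain d \<Longrightarrow> a \<in> \<Psi> d \<Longrightarrow> b \<in> \<Psi> d \<Longrightarrow> t \<in> \<Psi> d
      \<Longrightarrow> le d t a \<Longrightarrow> le d t b \<Longrightarrow> le d t (meet d a b)"
    using DC unfolding decent_def by meson
  have D2: "\<And>d X s s' s''. is_domain d \<Longrightarrow> DM X \<notin> set d \<Longrightarrow> s \<in> \<Psi> d \<Longrightarrow>
      s' \<in> \<Psi> (DM X # d) \<Longrightarrow> s'' \<in> \<Psi> (DM X # d) \<Longrightarrow>
      simeq le (DM X # d) s'' (meet (DM X # d) (lift d X s) s') \<Longrightarrow>
      simeq le d (proj d X s'') (meet d s (proj d X s'))"
    using DC unfolding decent_def by meson
  have P1: "\<And>d X s. is_domain d \<Longrightarrow> DM X \<notin> set d \<Longrightarrow> s \<in> \<Psi> (DM X # d) \<Longrightarrow>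
      P (DM X # d) s \<longleftrightarrow> P d (proj d X s)"
    using DC unfolding decent_def by meson
  have P2: "\<And>d s s'. is_domain d \<Longrightarrow> s \<in> \<Psi> d \<Longrightarrow> s' \<in> \<Psi> d \<Longrightarrow> P d s \<Longrightarrow> le d s s' \<Longrightarrow> P d s'"
    using DC unfolding decent_def by meson
  have EP: "\<And>d x. is_domain d \<Longrightarrow> DE x \<notin> set d \<Longrightarrow> \<Psi> (DE x # d) = \<Psi> d"
    using CS unfolding constraint_structure_def by meson
  have projc: "\<And>d X s. is_domain d \<Longrightarrow> DM X \<notin> set d \<Longrightarrow> s \<in> \<Psi> (DM X # d) \<Longrightarrow> proj d X s \<in> \<Psi> d"
    using CS unfolding constraint_structure_def by meson
  have liftc: "\<And>d X s. is_domain d \<Longrightarrow> DM X \<notin> set d \<Longrightarrow> s \<in> \<Psi> d \<Longrightarrow> lift d X s \<in> \<Psi> (DM X # d)"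
    using LS unfolding lift_structure_def by meson
  have EM: "\<And>d x a b. is_domain d \<Longrightarrow> DE x \<notin> set d \<Longrightarrow> a \<in> \<Psi> d \<Longrightarrow> b \<in> \<Psi> d \<Longrightarrow>
      meet (DE x # d) a b = meet d a b"
    using MS unfolding meet_structure_def by meson
  have EL: "\<And>d x a b. is_domain d \<Longrightarrow> DE x \<notin> set d \<Longrightarrow> a \<in> \<Psi> d \<Longrightarrow> b \<in> \<Psi> d \<Longrightarrow>
      le (DE x # d) a b = le d a b"
    using DC unfolding decent_def by meson
  have EPP: "\<And>d x a. is_domain d \<Longrightarrow> DE x \<notin> set d \<Longrightarrow> a \<in> \<Psi> d \<Longrightarrow>
      P (DE x # d) a = P d a"
    using DC unfolding decent_def by meson
  have A1: "\<And>d \<Gamma> s s'. is_domain d \<Longrightarrow> ctx_of d \<Gamma> \<Longrightarrow> s \<in> \<Psi> d \<Longrightarrow> s' \<in> \<Psi> d \<Longrightarrow>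
      R d s (ctx_lit \<Gamma>) s' \<Longrightarrow>
      (\<exists>s''\<in>\<Psi> d. simeq le d s' (meet d s s'') \<and> P d (meet d s s'') \<and> models d (ctx_lit \<Gamma>) s'')"
  proof -
    fix d \<Gamma> s s' assume "is_domain d" "ctx_of d \<Gamma>" "s \<in> \<Psi> d" "s' \<in> \<Psi> d" "R d s (ctx_lit \<Gamma>) s'"
    moreover have "lits_of d (ctx_lit \<Gamma>)"
      using \<open>ctx_of d \<Gamma>\<close> unfolding lits_of_def ctx_of_def ctx_lit_def by auto
    ultimately show "\<exists>s''\<in>\<Psi> d. simeq le d s' (meet d s s'') \<and> P d (meet d s s'') \<and> models d (ctx_lit \<Gamma>) s''"
      using RL unfolding relates_def by blast
  qed
  from assms(6) show ?thesis
  proof (induction rule: SDI.induct)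
    case (SDI_ax d \<Gamma> \<sigma> \<sigma>')
    then show ?case using A1 DI.DI_ax by metis
  next
    case (SDI_disj d \<sigma> \<Gamma> A B \<sigma>')
    then obtain t where "t \<in> \<Psi> d" "simeq le d \<sigma>' (meet d \<sigma> t)" "P d (meet d \<sigma> t)"
      "DI \<Psi> models meet proj d (\<Gamma> + {#A, B#}) t" and "is_domain d" "\<sigma> \<in> \<Psi> d" "\<sigma>' \<in> \<Psi> d" by blast
    moreover from this(4) have "DI \<Psi> models meet proj d (\<Gamma> + {#Disj A B#}) t" by (rule DI.DI_disj)
    ultimately show ?case by blast
  next
    case (SDI_conj1 d \<sigma> \<Gamma> A \<sigma>2 B \<sigma>')
    from SDI_conj1.IH(1) obtain t1 where t1: "t1 \<in> \<Psi> d" "simeq le d \<sigma>2 (meet d \<sigma> t1)"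
      "P d (meet d \<sigma> t1)" "DI \<Psi> models meet proj d (\<Gamma> + {#A#}) t1" and
      dd: "is_domain d" "\<sigma> \<in> \<Psi> d" "\<sigma>2 \<in> \<Psi> d" by blast
    from SDI_conj1.IH(2) obtain t2 where t2: "t2 \<in> \<Psi> d" "simeq le d \<sigma>' (meet d \<sigma>2 t2)"
      "P d (meet d \<sigma>2 t2)" "DI \<Psi> models meet proj d (\<Gamma> + {#B#}) t2" and
      s': "\<sigma>' \<in> \<Psi> d" by blast
    have m12: "meet d t1 t2 \<in> \<Psi> d" using mc dd t1 t2 by blast
    have ms1: "meet d \<sigma> t1 \<in> \<Psi> d" using mc dd t1 by blast
    have m2: "meet d \<sigma>2 t2 \<in> \<Psi> d" using mc dd t2 by blast
    have mall: "meet d \<sigma> (meet d t1 t2) \<in> \<Psi> d" using mc dd m12 by blast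
    have a1: "le d (meet d \<sigma>2 t2) \<sigma>2" using g1 dd t2 by blast
    have a2: "le d \<sigma>2 (meet d \<sigma> t1)" using t1(2) unfolding simeq_def by blast
    have a3: "le d (meet d \<sigma>2 t2) (meet d \<sigma> t1)" using trans[OF dd(1) m2 dd(3) ms1 a1 a2] .
    have a4: "le d (meet d \<sigma>2 t2) \<sigma>" using trans[OF dd(1) m2 ms1 dd(2) a3 g1[OF dd(1,2) t1(1)]] .
    have a5: "le d (meet d \<sigma>2 t2) t1" using trans[OF dd(1) m2 ms1 t1(1) a3 g2[OF dd(1,2) t1(1)]] .
    have a6: "le d (meet d \<sigma>2 t2) t2" using g2 dd t2 by blast
    have up: "le d (meet d \<sigma>2 t2) (meet d \<sigma> (meet d t1 t2))"
      using g3[OF dd(1,2) m12 m2 a4 g3[OF dd(1) t1(1) t2(1) m2 a5 a6]] .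
    have b1: "le d (meet d \<sigma> (meet d t1 t2)) \<sigma>" using g1 dd m12 by blast
    have b2: "le d (meet d \<sigma> (meet d t1 t2)) (meet d t1 t2)" using g2 dd m12 by blast
    have b3: "le d (meet d \<sigma> (meet d t1 t2)) t1" using trans[OF dd(1) mall m12 t1(1) b2 g1[OF dd(1) t1(1) t2(1)]] .
    have b4: "le d (meet d \<sigma> (meet d t1 t2)) t2" using trans[OF dd(1) mall m12 t2(1) b2 g2[OF dd(1) t1(1) t2(1)]] .
    have b5: "le d (meet d \<sigma> (meet d t1 t2)) (meet d \<sigma> t1)" using g3[OF dd(1,2) t1(1) mall b1 b3] .
    have b6: "le d (meet d \<sigma> (meet d t1 t2)) \<sigma>2"
      using trans[OF dd(1) mall ms1 dd(3) b5] t1(2) unfolding simeq_def by blast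
    have down: "le d (meet d \<sigma> (meet d t1 t2)) (meet d \<sigma>2 t2)" using g3[OF dd(1,3) t2(1) mall b6 b4] .
    have sim: "simeq le d \<sigma>' (meet d \<sigma> (meet d t1 t2))"
      using t2(2) up down trans[OF dd(1) s' m2 mall] trans[OF dd(1) mall m2 s']
      unfolding simeq_def by blast
    have "P d (meet d \<sigma> (meet d t1 t2))" using P2[OF dd(1) m2 mall t2(3) up] .
    moreover have "DI \<Psi> models meet proj d (\<Gamma> + {#Conj A B#}) (meet d t1 t2)"
      using DI.DI_conj[OF t1(4) t2(4)] .
    ultimately show ?case using dd s' sim m12 by blast
  next
    case (SDI_conj2 d \<sigma> \<Gamma> B \<sigma>2 A \<sigma>')
    from SDI_conj2.IH(1) obtain t1 where t1: "t1 \<in> \<Psi> d" "simeq le d \<sigma>2 (meet d \<sigma> t1)"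
      "P d (meet d \<sigma> t1)" "DI \<Psi> models meet proj d (\<Gamma> + {#B#}) t1" and
      dd: "is_domain d" "\<sigma> \<in> \<Psi> d" "\<sigma>2 \<in> \<Psi> d" by blast
    from SDI_conj2.IH(2) obtain t2 where t2: "t2 \<in> \<Psi> d" "simeq le d \<sigma>' (meet d \<sigma>2 t2)"
      "P d (meet d \<sigma>2 t2)" "DI \<Psi> models meet proj d (\<Gamma> + {#A#}) t2" and
      s': "\<sigma>' \<in> \<Psi> d" by blast
    have m12: "meet d t2 t1 \<in> \<Psi> d" using mc dd t1 t2 by blast
    have ms1: "meet d \<sigma> t1 \<in> \<Psi> d" using mc dd t1 by blast
    have m2: "meet d \<sigma>2 t2 \<in> \<Psi> d" using mc dd t2 by blast
    have mall: "meet d \<sigma> (meet d t2 t1) \<in> \<Psi> d" using mc dd m12 by blast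
    have a1: "le d (meet d \<sigma>2 t2) \<sigma>2" using g1 dd t2 by blast
    have a2: "le d \<sigma>2 (meet d \<sigma> t1)" using t1(2) unfolding simeq_def by blast
    have a3: "le d (meet d \<sigma>2 t2) (meet d \<sigma> t1)" using trans[OF dd(1) m2 dd(3) ms1 a1 a2] .
    have a4: "le d (meet d \<sigma>2 t2) \<sigma>" using trans[OF dd(1) m2 ms1 dd(2) a3 g1[OF dd(1,2) t1(1)]] .
    have a5: "le d (meet d \<sigma>2 t2) t1" using trans[OF dd(1) m2 ms1 t1(1) a3 g2[OF dd(1,2) t1(1)]] .
    have a6: "le d (meet d \<sigma>2 t2) t2" using g2 dd t2 by blast
    have up: "le d (meet d \<sigma>2 t2) (meet d \<sigma> (meet d t2 t1))"
      using g3[OF dd(1,2) m12 m2 a4 g3[OF dd(1) t2(1) t1(1) m2 a6 a5]] .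
    have b1: "le d (meet d \<sigma> (meet d t2 t1)) \<sigma>" using g1 dd m12 by blast
    have b2: "le d (meet d \<sigma> (meet d t2 t1)) (meet d t2 t1)" using g2 dd m12 by blast
    have b3: "le d (meet d \<sigma> (meet d t2 t1)) t1" using trans[OF dd(1) mall m12 t1(1) b2 g2[OF dd(1) t2(1) t1(1)]] .
    have b4: "le d (meet d \<sigma> (meet d t2 t1)) t2" using trans[OF dd(1) mall m12 t2(1) b2 g1[OF dd(1) t2(1) t1(1)]] .
    have b5: "le d (meet d \<sigma> (meet d t2 t1)) (meet d \<sigma> t1)" using g3[OF dd(1,2) t1(1) mall b1 b3] .
    have b6: "le d (meet d \<sigma> (meet d t2 t1)) \<sigma>2"
      using trans[OF dd(1) mall ms1 dd(3) b5] t1(2) unfolding simeq_def by blast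
    have down: "le d (meet d \<sigma> (meet d t2 t1)) (meet d \<sigma>2 t2)" using g3[OF dd(1,3) t2(1) mall b6 b4] .
    have sim: "simeq le d \<sigma>' (meet d \<sigma> (meet d t2 t1))"
      using t2(2) up down trans[OF dd(1) s' m2 mall] trans[OF dd(1) mall m2 s']
      unfolding simeq_def by blast
    have "P d (meet d \<sigma> (meet d t2 t1))" using P2[OF dd(1) m2 mall t2(3) up] .
    moreover have "DI \<Psi> models meet proj d (\<Gamma> + {#Conj A B#}) (meet d t2 t1)"
      using DI.DI_conj[OF t2(4) t1(4)] .
    ultimately show ?case using dd s' sim m12 by blast
  next
    case (SDI_ex d X \<Gamma> x A \<sigma> \<sigma>')
    let ?e = "DM X # d"
    from SDI_ex.IH obtain t where t: "t \<in> \<Psi> ?e" "simeq le ?e \<sigma>' (meet ?e (lift d X \<sigma>) t)"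
      "P ?e (meet ?e (lift d X \<sigma>) t)"
      "DI \<Psi> models meet proj ?e (\<Gamma> + {#subst x (Var (Met X)) A, Exists x A#}) t"
      and de: "is_domain ?e" and s': "\<sigma>' \<in> \<Psi> ?e" by blast
    have lc: "lift d X \<sigma> \<in> \<Psi> ?e" using liftc SDI_ex by blast
    have mt: "meet ?e (lift d X \<sigma>) t \<in> \<Psi> ?e" using mc[OF de lc t(1)] .
    have sim: "simeq le d (proj d X \<sigma>') (meet d \<sigma> (proj d X t))"
      using D2[OF SDI_ex(1,2,4) t(1) s' t(2)] .
    have r: "simeq le ?e (meet ?e (lift d X \<sigma>) t) (meet ?e (lift d X \<sigma>) t)"
      using refl[OF de mt] unfolding simeq_def by blast
    have sim2: "simeq le d (proj d X (meet ?e (lift d X \<sigma>) t)) (meet d \<sigma> (proj d X t))"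
      using D2[OF SDI_ex(1,2,4) t(1) mt r] .
    have pt: "proj d X t \<in> \<Psi> d" using projc SDI_ex(1,2) t(1) by blast
    have pm: "proj d X (meet ?e (lift d X \<sigma>) t) \<in> \<Psi> d" using projc SDI_ex(1,2) mt by blast
    have "P d (proj d X (meet ?e (lift d X \<sigma>) t))" using P1[OF SDI_ex(1,2) mt] t(3) by blast
    hence "P d (meet d \<sigma> (proj d X t))"
      using P2[OF SDI_ex(1) pm mc[OF SDI_ex(1,4) pt]] sim2 unfolding simeq_def by blast
    moreover have "DI \<Psi> models meet proj d (\<Gamma> + {#Exists x A#}) (proj d X t)"
      using DI.DI_ex[OF SDI_ex(1,2,3) t(4)] .
    moreover have "proj d X \<sigma>' \<in> \<Psi> d" using projc SDI_ex(1,2) s' by blast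
    ultimately show ?case using SDI_ex(1,4) sim pt by blast
  next
    case (SDI_all d y \<Gamma> x A \<sigma> \<sigma>')
    let ?e = "DE y # d"
    have EPd: "\<Psi> ?e = \<Psi> d" using EP SDI_all(1,2) by blast
    from SDI_all.IH obtain t where t: "t \<in> \<Psi> d" "simeq le ?e \<sigma>' (meet ?e \<sigma> t)"
      "P ?e (meet ?e \<sigma> t)"
      "DI \<Psi> models meet proj ?e (\<Gamma> + {#subst x (Var (Eig y)) A#}) t"
      and s': "\<sigma>' \<in> \<Psi> d" using EPd by blast
    have eq: "meet ?e \<sigma> t = meet d \<sigma> t" using EM SDI_all(1,2,4) t(1) by blast
    have mt: "meet d \<sigma> t \<in> \<Psi> d" using mc SDI_all(1,4) t(1) by blast
    have "simeq le d \<sigma>' (meet d \<sigma> t)"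
      using t(2) unfolding eq simeq_def using EL[OF SDI_all(1,2) s' mt] EL[OF SDI_all(1,2) mt s'] by blast
    moreover have "P d (meet d \<sigma> t)" using t(3) unfolding eq using EPP[OF SDI_all(1,2) mt] by blast
    moreover have "DI \<Psi> models meet proj d (\<Gamma> + {#Forall x A#}) t"
      using DI.DI_all[OF SDI_all(1,2,3) t(4)] .
    ultimately show ?case using SDI_all(1,4) s' t(1) by blast
  qed
qed

theorem mainTheorem5:
  fixes \<Psi> :: "domain \<Rightarrow> 'c set"
    and proj lift :: "domain \<Rightarrow> nat \<Rightarrow> 'c \<Rightarrow> 'c"
    and meet :: "domain \<Rightarrow> 'c \<Rightarrow> 'c \<Rightarrow> 'c"
    and le :: "domain \<Rightarrow> 'c \<Rightarrow> 'c \<Rightarrow> bool"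
    and P :: "domain \<Rightarrow> 'c \<Rightarrow> bool"
    and models :: "domain \<Rightarrow> ('f, 'p) fm set \<Rightarrow> 'c \<Rightarrow> bool"
    and R :: "domain \<Rightarrow> 'c \<Rightarrow> ('f, 'p) fm set \<Rightarrow> 'c \<Rightarrow> bool"
  assumes "constraint_structure \<Psi> proj"
    and "meet_structure \<Psi> meet"
    and "lift_structure \<Psi> lift"
    and "decent \<Psi> proj lift le meet P"
    and "relates \<Psi> le meet P models R"
    and "SDI \<Psi> R proj lift d \<sigma> \<Gamma> \<sigma>'"
  shows "\<exists>\<sigma>''\<in>\<Psi> d. simeq le d \<sigma>' (meet d \<sigma> \<sigma>'') \<and> P d (meet d \<sigma> \<sigma>'')
                   \<and> DI \<Psi> models meet proj d \<Gamma> \<sigma>''"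
  using main_ind[OF assms] by blast

end
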